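(* For every ordinal $\alpha$: if $(T^*_\alpha,P^*_\alpha)$ is consistent (i.e. $T^{*+}_\alpha\cap T^{*-}_\alpha=\emptyset$ and $P^{*+}_\alpha\cap P^{*-}_\alpha=\emptyset$), then it is sound$^*$, i.e. for every $\mathcal L$-sentence $\varphi$, if either $\#\varphi\in P_0^{*-}$ or $(\mathbb N,T^*_\alpha,P^*_\alpha)\models_{SK}\varphi\vee\neg\varphi$, then $(\mathbb N,T^*_\alpha,P^*_\alpha)\not\models_{SK}\mathscr P(\varphi)$.
   Context: Language. Let $\mathcal L_{\mathbb N}$ be the language of first-order Peano arithmetic and $\mathcal L=\mathcal L_{\mathbb N}\cup\{\mathrm T,\mathrm P\}$ with unary predicates $\mathrm T,\mathrm P$. $\mathcal L$-formulas are in Tait style: literals are $s=t$, $s\neq t$, $\mathrm Tt$, $\neg\mathrm Tt$, $\mathrm Pt$, $\neg\mathrm Pt$; formulas are built from literals by $\wedge,\vee,\forall,\exists$; negation of an arbitrary formula is defined by De Morgan dualities with $\neg\neg\varphi:=\varphi$. A standard Gödel numbering is fixed; $\#e$ is the code of $e$, $\ulcorner e\urcorner$ the numeral of $\#e$, $\mathrm{val}(t)$ the value of a closed term $t$, $\dot\neg$ the primitive recursive function with $\dot\neg(\#\varphi)=\#\neg\varphi$; $\mathrm T\varphi,\mathrm P\varphi$ abbreviate $\mathrm T\ulcorner\varphi\urcorner,\mathrm P\ulcorner\varphi\urcorner$. Semantics. A partial model is $(\mathbb N,T,P)$ with $\mathbb N$ the standard model and $T=(T^+,T^-)$, $P=(P^+,P^-)$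 pairs of subsets of $\omega$. Strong Kleene satisfaction $\models_{SK}$: arithmetic literals evaluated in $\mathbb N$; $\mathrm Tt$ satisfied iff $\mathrm{val}(t)\in T^+$, $\neg\mathrm Tt$ iff $\mathrm{val}(t)\in T^-$, likewise for $\mathrm P$ with $P^\pm$; conjunction iff both, disjunction iff at least one, $\forall x\varphi(x)$ iff all numeral instances, $\exists x\varphi(x)$ iff some numeral instance. Base paradoxicality. $\mathrm{PA}[\mathrm{SK}]$ is the two-sided sequent calculus for Strong Kleene logic with identity in $\mathcal L$ (initial sequents $\varphi\Rightarrow\varphi$, cut, weakening, the rule from $\Gamma\Rightarrow\Delta,\varphi$ infer $\neg\varphi,\Gamma\Rightarrow\Delta$, usual rules for $\wedge,\vee,\forall,\exists$, reflexivity $\Rightarrow t=t$, replacement from $\Gamma\Rightarrow\Delta,\varphi(t)$ infer $\Gamma\Rightarrow\Delta,s\neq t,\varphi(s)$) plus the initial sequents of Peano arithmetic and the induction rule for all $\mathcal L$-formulas. A sentence $\varphi$ is base paradoxical iff $\mathrm{PA}[\mathrm{SK}]$ derives $\varphi\Leftrightarrow\neg\mathrm T\varphi$ and $\neg\varphi\Leftrightarrow\mathrm T\varphi$ ($\Leftrightarrow$ meaning both sequents). $B(x)$ is an $\mathcal L_{\mathbb N}$-formula defining in $\mathbb N$ the set of codes of base paradoxical sentences, and $\Pi(x):=B(x)\vee B(\dot\neg x)$. Paradoxicality clauses. Let $\mathscr P(x)$ be the $\mathcal L$-formula which is the disjunction of: (1) $x$ codes a sentence and $\Pi(x)$; (2)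 $x$ codes a sentence $\mathrm Tt$ ($t$ a closed term) and $\mathrm P(\mathrm{val}(t))$; (3) $x$ codes a sentence $\neg\mathrm Tt$ and $\mathrm P(\mathrm{val}(t))$; (4) $x$ codes a sentence $\psi\wedge\theta$ and $(\mathrm P\psi\wedge\mathrm P\theta)\vee(\mathrm T\psi\wedge\mathrm P\theta)\vee(\mathrm T\theta\wedge\mathrm P\psi)$; (5) $x$ codes a sentence $\psi\vee\theta$ and $(\mathrm P\psi\wedge\mathrm P\theta)\vee(\neg\mathrm T\psi\wedge\mathrm P\theta)\vee(\neg\mathrm T\theta\wedge\mathrm P\psi)$; (6) $x$ codes a sentence $\forall v\psi$ and $\exists y\,\mathrm P\psi(\dot y)\wedge\forall y(\mathrm P\psi(\dot y)\vee\mathrm T\psi(\dot y))$; (7) $x$ codes a sentence $\exists v\psi$ and $\exists y\,\mathrm P\psi(\dot y)\wedge\forall y(\mathrm P\psi(\dot y)\vee\neg\mathrm T\psi(\dot y))$; here $\psi(\dot y)$ is the code of the result of substituting the numeral of $y$ for $v$. Write $\mathscr P(\varphi)$ for $\mathscr P(\ulcorner\varphi\urcorner)$. Modified sequence. Let $P_0^{*-}$ be the set of codes of the sentences $\mathrm P\ulcorner\varphi\urcorner$ for $\varphi$ an $\mathcal L$-formula. Define $\Gamma^*_{\mathscr{TP}}(T,P)=\big((\{\#\varphi:(\mathbb N,T,P)\models_{SK}\varphi\},\{\#\varphi:(\mathbb N,T,P)\models_{SK}\neg\varphi\}),(\{\#\varphi:(\mathbb N,T,P)\models_{SK}\mathscr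 P(\varphi)\},\{\#\varphi:(\mathbb N,T,P)\models_{SK}\varphi\vee\neg\varphi\}\cup P_0^{*-})\big)$, $\varphi$ ranging over $\mathcal L$-sentences. Define $(T^*_0,P^*_0)=((\emptyset,\emptyset),(\emptyset,P_0^{*-}))$, $(T^*_{\xi+1},P^*_{\xi+1})=\Gamma^*_{\mathscr{TP}}(T^*_\xi,P^*_\xi)$, and $(T^*_\lambda,P^*_\lambda)=\bigcup_{\xi<\lambda}(T^*_\xi,P^*_\xi)$ (componentwise union) for limit $\lambda$. *)

theory Defs
  imports Main "HOL-Library.Nat_Bijection"
begin

section \<open>Syntax of L = L_N + {T, P} (Tait style, de Bruijn variables)\<close>

text \<open>Terms of the language of PA: variables, 0, successor, +, *.
  Variables are de Bruijn indices: a quantifier binds index 0.\<close>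
datatype trm = Var nat | Zero | S trm | Plus trm trm | Times trm trm

datatype form =
    Eq trm trm | Neq trm trm
  | Tr trm | NTr trm | Pr trm | NPr trm
  | And form form | Or form form
  | All form | Ex form

fun neg :: "form \<Rightarrow> form" where
  "neg (Eq s t) = Neq s t"
| "neg (Neq s t) = Eq s t"
| "neg (Tr t) = NTr t"
| "neg (NTr t) = Tr t"
| "neg (Pr t) = NPr t"
| "neg (NPr t) = Pr t"
| "neg (And a b) = Or (neg a) (neg b)"
| "neg (Or a b) = And (neg a) (neg b)"
| "neg (All a) = Ex (neg a)"
| "neg (Ex a) = All (neg a)"

primrec substt :: "(nat \<Rightarrow> trm) \<Rightarrow> trm \<Rightarrow> trm" where
  "substt \<sigma> (Var n) = \<sigma> n"
| "substt \<sigma> Zero = Zero"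
| "substt \<sigma> (S t) = S (substt \<sigma> t)"
| "substt \<sigma> (Plus s t) = Plus (substt \<sigma> s) (substt \<sigma> t)"
| "substt \<sigma> (Times s t) = Times (substt \<sigma> s) (substt \<sigma> t)"

definition liftt :: "trm \<Rightarrow> trm" where
  "liftt = substt (\<lambda>k. Var (Suc k))"

definition shift :: "(nat \<Rightarrow> trm) \<Rightarrow> nat \<Rightarrow> trm" where
  "shift \<sigma> k = (case k of 0 \<Rightarrow> Var 0 | Suc j \<Rightarrow> liftt (\<sigma> j))"

primrec substf :: "(nat \<Rightarrow> trm) \<Rightarrow> form \<Rightarrow> form" where
  "substf \<sigma> (Eq s t) = Eq (substt \<sigma> s) (substt \<sigma> t)"
| "substf \<sigma> (Neq s t) = Neq (substt \<sigma> s) (substt \<sigma> t)"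
| "substf \<sigma> (Tr t) = Tr (substt \<sigma> t)"
| "substf \<sigma> (NTr t) = NTr (substt \<sigma> t)"
| "substf \<sigma> (Pr t) = Pr (substt \<sigma> t)"
| "substf \<sigma> (NPr t) = NPr (substt \<sigma> t)"
| "substf \<sigma> (And a b) = And (substf \<sigma> a) (substf \<sigma> b)"
| "substf \<sigma> (Or a b) = Or (substf \<sigma> a) (substf \<sigma> b)"
| "substf \<sigma> (All a) = All (substf (shift \<sigma>) a)"
| "substf \<sigma> (Ex a) = Ex (substf (shift \<sigma>) a)"

text \<open>\<open>inst a u\<close> = a(u): the body \<open>a\<close> of a quantifier with its bound variable
  (index 0) replaced by the term \<open>u\<close>.\<close>
definition inst :: "form \<Rightarrow> trm \<Rightarrow> form" where
  "inst a u = substf (\<lambda>k. case k of 0 \<Rightarrow> u | Suc j \<Rightarrow> Var j) a"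

definition liftf :: "form \<Rightarrow> form" where
  "liftf = substf (\<lambda>k. Var (Suc k))"

primrec closedt :: "nat \<Rightarrow> trm \<Rightarrow> bool" where
  "closedt n (Var k) = (k < n)"
| "closedt n Zero = True"
| "closedt n (S t) = closedt n t"
| "closedt n (Plus s t) = (closedt n s \<and> closedt n t)"
| "closedt n (Times s t) = (closedt n s \<and> closedt n t)"

primrec closedf :: "nat \<Rightarrow> form \<Rightarrow> bool" where
  "closedf n (Eq s t) = (closedt n s \<and> closedt n t)"
| "closedf n (Neq s t) = (closedt n s \<and> closedt n t)"
| "closedf n (Tr t) = closedt n t"
| "closedf n (NTr t) = closedt n t"
| "closedf n (Pr t) = closedt n t"
| "closedf n (NPr t) = closedt n t"
| "closedf n (And a b) = (closedf n a \<and> closedf n b)"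
| "closedf n (Or a b) = (closedf n a \<and> closedf n b)"
| "closedf n (All a) = closedf (Suc n) a"
| "closedf n (Ex a) = closedf (Suc n) a"

definition sentence :: "form \<Rightarrow> bool" where
  "sentence a = closedf 0 a"

primrec num :: "nat \<Rightarrow> trm" where
  "num 0 = Zero"
| "num (Suc n) = S (num n)"

primrec val :: "trm \<Rightarrow> nat" where
  "val (Var k) = 0"
| "val Zero = 0"
| "val (S t) = Suc (val t)"
| "val (Plus s t) = val s + val t"
| "val (Times s t) = val s * val t"

primrec codet :: "trm \<Rightarrow> nat" where
  "codet (Var k) = prod_encode (0, k)"
| "codet Zero = prod_encode (1, 0)"
| "codet (S t) = prod_encode (2, codet t)"
| "codet (Plus s t) = prod_encode (3, prod_encode (codet s, codet t))"
| "codet (Times s t) = prod_encode (4, prod_encode (codet s, codet t))"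

primrec code :: "form \<Rightarrow> nat" where
  "code (Eq s t) = prod_encode (0, prod_encode (codet s, codet t))"
| "code (Neq s t) = prod_encode (1, prod_encode (codet s, codet t))"
| "code (Tr t) = prod_encode (2, codet t)"
| "code (NTr t) = prod_encode (3, codet t)"
| "code (Pr t) = prod_encode (4, codet t)"
| "code (NPr t) = prod_encode (5, codet t)"
| "code (And a b) = prod_encode (6, prod_encode (code a, code b))"
| "code (Or a b) = prod_encode (7, prod_encode (code a, code b))"
| "code (All a) = prod_encode (8, code a)"
| "code (Ex a) = prod_encode (9, code a)"

definition quote :: "form \<Rightarrow> trm" where
  "quote a = num (code a)"

section \<open>Strong Kleene semantics over partial models (N, T, P)\<close>

type_synonym pair = "nat set \<times> nat set"   \<comment> \<open>(extension, anti-extension)\<close>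

primrec fsz :: "form \<Rightarrow> nat" where
  "fsz (Eq s t) = 1" | "fsz (Neq s t) = 1" | "fsz (Tr t) = 1" | "fsz (NTr t) = 1"
| "fsz (Pr t) = 1" | "fsz (NPr t) = 1"
| "fsz (And a b) = Suc (fsz a + fsz b)" | "fsz (Or a b) = Suc (fsz a + fsz b)"
| "fsz (All a) = Suc (fsz a)" | "fsz (Ex a) = Suc (fsz a)"

lemma fsz_substf [simp]: "fsz (substf \<sigma> a) = fsz a"
  by (induction a arbitrary: \<sigma>) auto

lemma fsz_inst [simp]: "fsz (inst a u) = fsz a"
  by (simp add: inst_def)

function sat :: "pair \<Rightarrow> pair \<Rightarrow> form \<Rightarrow> bool" where
  "sat T P (Eq s t) = (val s = val t)"
| "sat T P (Neq s t) = (val s \<noteq> val t)"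
| "sat T P (Tr t) = (val t \<in> fst T)"
| "sat T P (NTr t) = (val t \<in> snd T)"
| "sat T P (Pr t) = (val t \<in> fst P)"
| "sat T P (NPr t) = (val t \<in> snd P)"
| "sat T P (And a b) = (sat T P a \<and> sat T P b)"
| "sat T P (Or a b) = (sat T P a \<or> sat T P b)"
| "sat T P (All a) = (\<forall>n. sat T P (inst a (num n)))"
| "sat T P (Ex a) = (\<exists>n. sat T P (inst a (num n)))"
  by pat_completeness auto
termination
  by (relation "measure (\<lambda>(T, P, a). fsz a)") auto

section \<open>The sequent calculus PA[SK]\<close>

text \<open>Sequents are pairs of finite sets of formulas. Eigenvariable conditions are
  realised in de Bruijn style: the context is lifted so that index 0 is fresh.\<close>
inductive deriv :: "form set \<Rightarrow> form set \<Rightarrow> bool" where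
  init: "deriv {a} {a}"
| cut: "deriv G (insert a D) \<Longrightarrow> deriv (insert a G) D \<Longrightarrow> deriv G D"
| weak: "deriv G D \<Longrightarrow> G \<subseteq> G' \<Longrightarrow> D \<subseteq> D' \<Longrightarrow> finite G' \<Longrightarrow> finite D' \<Longrightarrow> deriv G' D'"
| negL: "deriv G (insert a D) \<Longrightarrow> deriv (insert (neg a) G) D"
| andL1: "deriv (insert a G) D \<Longrightarrow> deriv (insert (And a b) G) D"
| andL2: "deriv (insert b G) D \<Longrightarrow> deriv (insert (And a b) G) D"
| andR: "deriv G (insert a D) \<Longrightarrow> deriv G (insert b D) \<Longrightarrow> deriv G (insert (And a b) D)"
| orL: "deriv (insert a G) D \<Longrightarrow> deriv (insert b G) D \<Longrightarrow> deriv (insert (Or a b) G) D"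
| orR1: "deriv G (insert a D) \<Longrightarrow> deriv G (insert (Or a b) D)"
| orR2: "deriv G (insert b D) \<Longrightarrow> deriv G (insert (Or a b) D)"
| allL: "deriv (insert (inst a t) G) D \<Longrightarrow> deriv (insert (All a) G) D"
| allR: "deriv (liftf ` G) (insert a (liftf ` D)) \<Longrightarrow> deriv G (insert (All a) D)"
| exL: "deriv (insert a (liftf ` G)) (liftf ` D) \<Longrightarrow> deriv (insert (Ex a) G) D"
| exR: "deriv G (insert (inst a t) D) \<Longrightarrow> deriv G (insert (Ex a) D)"
| refl: "deriv {} {Eq t t}"
| repl: "deriv G (insert (inst a t) D) \<Longrightarrow> deriv G (insert (Neq s t) (insert (inst a s) D))"
| pa1: "deriv {} {Neq (S t) Zero}"
| pa2: "deriv {Eq (S s) (S t)} {Eq s t}"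
| pa3: "deriv {} {Eq (Plus s Zero) s}"
| pa4: "deriv {} {Eq (Plus s (S t)) (S (Plus s t))}"
| pa5: "deriv {} {Eq (Times s Zero) Zero}"
| pa6: "deriv {} {Eq (Times s (S t)) (Plus (Times s t) s)}"
| ind: "deriv (insert a (liftf ` G))
           (insert (substf (\<lambda>k. if k = 0 then S (Var 0) else Var k) a) (liftf ` D))
        \<Longrightarrow> deriv (insert (inst a Zero) G) (insert (inst a t) D)"

definition base_paradoxical :: "form \<Rightarrow> bool" where
  "base_paradoxical a \<longleftrightarrow> sentence a \<and>
     deriv {a} {neg (Tr (quote a))} \<and> deriv {neg (Tr (quote a))} {a} \<and>
     deriv {neg a} {Tr (quote a)} \<and> deriv {Tr (quote a)} {neg a}"

text \<open>SK-satisfaction of the L-formula \<P>(x) at the number \<open>x\<close>: its arithmetical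
  parts (syntax predicates, B, Pi) are L_N-formulas and are evaluated in N; the
  T/P-atoms are evaluated in the partial model.  Clause (1): Pi(x) = B(x) or B(neg x).\<close>
definition satPar :: "pair \<Rightarrow> pair \<Rightarrow> nat \<Rightarrow> bool" where
  "satPar T P x \<longleftrightarrow>
     (\<exists>a. sentence a \<and> x = code a \<and> (base_paradoxical a \<or> base_paradoxical (neg a)))
   \<or> (\<exists>t. closedt 0 t \<and> x = code (Tr t) \<and> val t \<in> fst P)
   \<or> (\<exists>t. closedt 0 t \<and> x = code (NTr t) \<and> val t \<in> fst P)
   \<or> (\<exists>a b. sentence (And a b) \<and> x = code (And a b) \<and>
        ((code a \<in> fst P \<and> code b \<in> fst P) \<or> (code a \<in> fst T \<and> code b \<in> fst P)
         \<or> (code b \<in> fst T \<and> code a \<in> fst P)))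
   \<or> (\<exists>a b. sentence (Or a b) \<and> x = code (Or a b) \<and>
        ((code a \<in> fst P \<and> code b \<in> fst P) \<or> (code a \<in> snd T \<and> code b \<in> fst P)
         \<or> (code b \<in> snd T \<and> code a \<in> fst P)))
   \<or> (\<exists>a. sentence (All a) \<and> x = code (All a) \<and>
        (\<exists>y. code (inst a (num y)) \<in> fst P) \<and>
        (\<forall>y. code (inst a (num y)) \<in> fst P \<or> code (inst a (num y)) \<in> fst T))
   \<or> (\<exists>a. sentence (Ex a) \<and> x = code (Ex a) \<and>
        (\<exists>y. code (inst a (num y)) \<in> fst P) \<and>
        (\<forall>y. code (inst a (num y)) \<in> fst P \<or> code (inst a (num y)) \<in> snd T))"

section \<open>The modified transfinite sequence\<close>

type_synonym stage = "pair \<times> pair"   \<comment> \<open>(T, P)\<close>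

definition P0minus :: "nat set" where
  "P0minus = {code (Pr (quote a)) | a. True}"

definition Gamma :: "stage \<Rightarrow> stage" where
  "Gamma TP = (let T = fst TP; P = snd TP in
     (({code a | a. sentence a \<and> sat T P a},
       {code a | a. sentence a \<and> sat T P (neg a)}),
      ({code a | a. sentence a \<and> satPar T P (code a)},
       {code a | a. sentence a \<and> sat T P (Or a (neg a))} \<union> P0minus)))"

definition stage0 :: stage where
  "stage0 = (({}, {}), ({}, P0minus))"

definition unionS :: "stage set \<Rightarrow> stage" where
  "unionS X = (((\<Union>x\<in>X. fst (fst x)), (\<Union>x\<in>X. snd (fst x))),
               ((\<Union>x\<in>X. fst (snd x)), (\<Union>x\<in>X. snd (snd x))))"

text \<open>Ordinals are represented by elements of well-ordered types; one step of the
  recursion distinguishes zero, successor and limit elements.\<close>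
definition stage_step :: "('a::wellorder \<Rightarrow> stage) \<Rightarrow> 'a \<Rightarrow> stage" where
  "stage_step f x =
     (if \<forall>y. \<not> y < x then stage0
      else if \<exists>y. y < x \<and> (\<forall>z. \<not> (y < z \<and> z < x))
      then Gamma (f (THE y. y < x \<and> (\<forall>z. \<not> (y < z \<and> z < x))))
      else unionS (f ` {y. y < x}))"

definition stage :: "'a::wellorder \<Rightarrow> stage" where
  "stage = wfrec {(y, x). y < x} stage_step"

lemma stage_unfold: "stage x = stage_step stage x"
proof -
  have wf: "wf {(y, x). y < (x::'a)}" using wf by (simp add: wf_def)
  have "stage x = stage_step (cut stage {(y, x). y < x} x) x"
    unfolding stage_def by (rule wfrec[OF wf])
  also have "\<dots> = stage_step stage x"
  proof -
    have eq: "\<And>y. y < x \<Longrightarrow> cut stage {(y, x). y < x} x y = stage y"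
      by (simp add: cut_def)
    have the: "(THE y. y < x \<and> (\<forall>z. \<not> (y < z \<and> z < x))) < x"
      if ex: "\<exists>y. y < x \<and> (\<forall>z. \<not> (y < z \<and> z < x))"
    proof -
      from ex obtain y where y: "y < x \<and> (\<forall>z. \<not> (y < z \<and> z < x))" by blast
      have u: "w = y" if w: "w < x \<and> (\<forall>z. \<not> (w < z \<and> z < x))" for w
      proof (rule ccontr)
        assume "w \<noteq> y"
        then have "w < y \<or> y < w" by (rule neq_iff[THEN iffD1])
        then show False using w y by blast
      qed
      have "(THE y. y < x \<and> (\<forall>z. \<not> (y < z \<and> z < x))) = y"
        by (rule the_equality) (use y u in blast)+
      then show ?thesis using y by simp
    qed
    have img: "cut stage {(y, x). y < x} x ` {y. y < x} = stage ` {y. y < x}"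
      using eq by (auto intro: image_cong)
    show ?thesis
      unfolding stage_step_def
      apply (simp only: img)
      apply (cases "\<exists>y. y < x \<and> (\<forall>z. \<not> (y < z \<and> z < x))")
       apply (simp only: eq[OF the] if_True)
      apply (simp only: if_False)
      done
  qed
  finally show ?thesis .
qed

definition consistent :: "stage \<Rightarrow> bool" where
  "consistent TP \<longleftrightarrow> fst (fst TP) \<inter> snd (fst TP) = {} \<and> fst (snd TP) \<inter> snd (snd TP) = {}"

definition sound_star :: "stage \<Rightarrow> bool" where
  "sound_star TP \<longleftrightarrow> (\<forall>a. sentence a \<longrightarrow>
      (code a \<in> P0minus \<or> sat (fst TP) (snd TP) (Or a (neg a))) \<longrightarrow>
      \<not> satPar (fst TP) (snd TP) (code a))"

end

theory Submission
  imports Defs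
begin


lemma codet_inj: "codet s = codet t \<Longrightarrow> s = t"
  by (induction s arbitrary: t; case_tac t; auto)

lemma code_inj: "code a = code b \<Longrightarrow> a = b"
  by (induction a arbitrary: b; case_tac b; auto dest: codet_inj)

lemma neg_neg [simp]: "neg (neg a) = a"
  by (induction a) auto

lemma neg_substf: "neg (substf \<sigma> a) = substf \<sigma> (neg a)"
  by (induction a arbitrary: \<sigma>) auto

lemma neg_inst: "neg (inst a u) = inst (neg a) u"
  by (simp add: inst_def neg_substf)

lemma val_num [simp]: "val (num n) = n"
  by (induction n) auto

definition econs :: "nat \<Rightarrow> (nat \<Rightarrow> nat) \<Rightarrow> nat \<Rightarrow> nat" where
  "econs n e k = (case k of 0 \<Rightarrow> n | Suc j \<Rightarrow> e j)"

primrec evalt :: "(nat \<Rightarrow> nat) \<Rightarrow> trm \<Rightarrow> nat" where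
  "evalt e (Var k) = e k"
| "evalt e Zero = 0"
| "evalt e (S t) = Suc (evalt e t)"
| "evalt e (Plus s t) = evalt e s + evalt e t"
| "evalt e (Times s t) = evalt e s * evalt e t"

primrec satv :: "pair \<Rightarrow> pair \<Rightarrow> (nat \<Rightarrow> nat) \<Rightarrow> form \<Rightarrow> bool" where
  "satv T P e (Eq s t) = (evalt e s = evalt e t)"
| "satv T P e (Neq s t) = (evalt e s \<noteq> evalt e t)"
| "satv T P e (Tr t) = (evalt e t \<in> fst T)"
| "satv T P e (NTr t) = (evalt e t \<in> snd T)"
| "satv T P e (Pr t) = (evalt e t \<in> fst P)"
| "satv T P e (NPr t) = (evalt e t \<in> snd P)"
| "satv T P e (And a b) = (satv T P e a \<and> satv T P e b)"
| "satv T P e (Or a b) = (satv T P e a \<or> satv T P e b)"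
| "satv T P e (All a) = (\<forall>n. satv T P (econs n e) a)"
| "satv T P e (Ex a) = (\<exists>n. satv T P (econs n e) a)"

lemma evalt_substt: "evalt e (substt \<sigma> t) = evalt (\<lambda>k. evalt e (\<sigma> k)) t"
  by (induction t) auto

lemma evalt_liftt: "evalt (econs n e) (liftt t) = evalt e t"
  by (simp add: liftt_def evalt_substt econs_def)

lemma shift_env: "(\<lambda>k. evalt (econs n e) (shift \<sigma> k)) = econs n (\<lambda>k. evalt e (\<sigma> k))"
  apply (rule ext, case_tac k)
   apply (simp add: shift_def econs_def)
  apply (simp add: shift_def evalt_liftt)
  apply (simp add: econs_def)
  done

lemma satv_substf: "satv T P e (substf \<sigma> a) = satv T P (\<lambda>k. evalt e (\<sigma> k)) a"
  by (induction a arbitrary: e \<sigma>) (auto simp: evalt_substt shift_env)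

lemma satv_inst: "satv T P e (inst a t) = satv T P (econs (evalt e t) e) a"
proof -
  have "(\<lambda>k. evalt e (case k of 0 \<Rightarrow> t | Suc j \<Rightarrow> Var j)) = econs (evalt e t) e"
    by (rule ext, case_tac k) (auto simp: econs_def)
  then show ?thesis by (simp add: inst_def satv_substf)
qed

lemma satv_liftf: "satv T P (econs n e) (liftf g) = satv T P e g"
proof -
  have "(\<lambda>k. evalt (econs n e) (Var (Suc k))) = e"
    by (rule ext) (auto simp: econs_def)
  then show ?thesis by (simp add: liftf_def satv_substf)
qed

lemma satv_indsub: "satv T P (econs n e) (substf (\<lambda>k. if k = 0 then S (Var 0) else Var k) a)
   = satv T P (econs (Suc n) e) a"
proof -
  have "(\<lambda>k. evalt (econs n e) (if k = 0 then S (Var 0) else Var k)) = econs (Suc n) e"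
    by (rule ext, case_tac k) (auto simp: econs_def)
  then show ?thesis by (simp add: satv_substf)
qed

lemma evalt_num [simp]: "evalt e (num n) = n"
  by (induction n) auto

lemma evalt_val: "evalt (\<lambda>_. 0) t = val t"
  by (induction t) auto

lemma sat_satv: "sat T P a = satv T P (\<lambda>_. 0) a"
proof (induction T P a rule: sat.induct)
  case (9 T P a)
  have "\<And>n. satv T P (\<lambda>_. 0) (inst a (num n)) = satv T P (econs n (\<lambda>_. 0)) a"
    by (simp add: satv_inst)
  then show ?case using 9 by simp
next
  case (10 T P a)
  have "\<And>n. satv T P (\<lambda>_. 0) (inst a (num n)) = satv T P (econs n (\<lambda>_. 0)) a"
    by (simp add: satv_inst)
  then show ?case using 10 by simp
qed (auto simp: evalt_val)

lemma satv_cons: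
  assumes "fst T \<inter> snd T = {}" "fst P \<inter> snd P = {}"
  shows "satv T P e a \<Longrightarrow> satv T P e (neg a) \<Longrightarrow> False"
  using assms by (induction a arbitrary: e) auto

lemma soundness:
  assumes "deriv G D" "fst T \<inter> snd T = {}" "fst P \<inter> snd P = {}"
  shows "\<forall>g\<in>G. satv T P e g \<Longrightarrow> \<exists>d\<in>D. satv T P e d"
  using assms(1)
proof (induction arbitrary: e rule: deriv.induct)
  case (negL G a D)
  then show ?case using satv_cons[OF assms(2,3)] by fastforce
next
  case (weak G D G' D')
  then show ?case by blast
next
  case (allL a t G D)
  then show ?case by (simp add: satv_inst)
next
  case (allR G a D)
  show ?case
  proof (cases "\<exists>d\<in>D. satv T P e d")
    case False
    have "satv T P (econs n e) a" for n
      using allR.IH[of "econs n e"] allR.prems False by (auto simp: satv_liftf)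
    then show ?thesis by simp
  qed auto
next
  case (exL a G D)
  from exL.prems obtain n where n: "satv T P (econs n e) a" "\<forall>g\<in>G. satv T P e g" by auto
  show ?case using exL.IH[of "econs n e"] n by (auto simp: satv_liftf)
next
  case (exR G a t D)
  then show ?case by (force simp: satv_inst)
next
  case (repl G a t D s)
  then show ?case by (auto simp: satv_inst)
next
  case (ind a G D t)
  show ?case
  proof (cases "\<exists>d\<in>D. satv T P e d")
    case False
    have "satv T P (econs n e) a" for n
    proof (induction n)
      case 0 then show ?case using ind.prems by (simp add: satv_inst)
    next
      case (Suc n)
      then show ?case using ind.IH[of "econs n e"] ind.prems False
        by (auto simp: satv_liftf satv_indsub)
    qed
    then show ?thesis by (simp add: satv_inst)
  qed auto
qed auto

lemma sound1:
  assumes "deriv {a} {b}" "fst T \<inter> snd T = {}" "fst P \<inter> snd P = {}" "sat T P a"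
  shows "sat T P b"
  using soundness[OF assms(1-3), of "\<lambda>_. 0"] assms(4) by (simp add: sat_satv)



definition leS :: "stage \<Rightarrow> stage \<Rightarrow> bool" where
  "leS X Y \<longleftrightarrow> fst (fst X) \<subseteq> fst (fst Y) \<and> snd (fst X) \<subseteq> snd (fst Y)
     \<and> fst (snd X) \<subseteq> fst (snd Y) \<and> snd (snd X) \<subseteq> snd (snd Y)"

lemma leS_trans: "leS X Y \<Longrightarrow> leS Y Z \<Longrightarrow> leS X Z"
  unfolding leS_def by blast

lemma leS_refl: "leS X X"
  unfolding leS_def by blast

lemma sat_mono: "sat T P a \<Longrightarrow> fst T \<subseteq> fst T' \<Longrightarrow> snd T \<subseteq> snd T' \<Longrightarrow>
   fst P \<subseteq> fst P' \<Longrightarrow> snd P \<subseteq> snd P' \<Longrightarrow> sat T' P' a"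
  by (induction T P a rule: sat.induct) auto

lemma satS_mono: "leS X Y \<Longrightarrow> sat (fst X) (snd X) a \<Longrightarrow> sat (fst Y) (snd Y) a"
  unfolding leS_def by (erule sat_mono) auto

lemma satPar_mono: "satPar T P x \<Longrightarrow> fst T \<subseteq> fst T' \<Longrightarrow> snd T \<subseteq> snd T' \<Longrightarrow>
   fst P \<subseteq> fst P' \<Longrightarrow> satPar T' P' x"
  unfolding satPar_def
  apply (elim disjE)
  apply (rule disjI1, assumption)
  apply (rule disjI2, rule disjI1, blast)
  apply (rule disjI2, rule disjI2, rule disjI1, blast)
  apply (rule disjI2, rule disjI2, rule disjI2, rule disjI1) apply (elim exE conjE) apply (intro exI conjI, assumption+) apply blast
  apply (rule disjI2, rule disjI2, rule disjI2, rule disjI2, rule disjI1) apply (elim exE conjE) apply (intro exI conjI, assumption+) apply blast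
  apply (rule disjI2, rule disjI2, rule disjI2, rule disjI2, rule disjI2, rule disjI1) apply (elim exE conjE) apply (intro exI conjI, assumption+) apply blast apply blast
  apply (rule disjI2, rule disjI2, rule disjI2, rule disjI2, rule disjI2, rule disjI2) apply (elim exE conjE) apply (intro exI conjI, assumption+) apply blast apply blast
  done

lemma Gamma_mono: "leS X Y \<Longrightarrow> leS (Gamma X) (Gamma Y)"
proof -
  assume a: "leS X Y"
  have s: "sat (fst X) (snd X) b \<Longrightarrow> sat (fst Y) (snd Y) b" for b using satS_mono[OF a] .
  have p: "satPar (fst X) (snd X) x \<Longrightarrow> satPar (fst Y) (snd Y) x" for x
    using a unfolding leS_def by (auto elim: satPar_mono)
  show ?thesis unfolding leS_def Gamma_def Let_def fst_conv snd_conv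
  proof (intro conjI subsetI)
    fix n assume "n \<in> {code a |a. sentence a \<and> sat (fst X) (snd X) a}"
    then show "n \<in> {code a |a. sentence a \<and> sat (fst Y) (snd Y) a}" using s by blast
  next
    fix n assume "n \<in> {code a |a. sentence a \<and> sat (fst X) (snd X) (neg a)}"
    then show "n \<in> {code a |a. sentence a \<and> sat (fst Y) (snd Y) (neg a)}" using s by blast
  next
    fix n assume "n \<in> {code a |a. sentence a \<and> satPar (fst X) (snd X) (code a)}"
    then show "n \<in> {code a |a. sentence a \<and> satPar (fst Y) (snd Y) (code a)}" using p by blast
  next
    fix n assume "n \<in> {code a |a. sentence a \<and> sat (fst X) (snd X) (Or a (neg a))} \<union> P0minus"
    then show "n \<in> {code a |a. sentence a \<and> sat (fst Y) (snd Y) (Or a (neg a))} \<union> P0minus" using s by blast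
  qed
qed

lemma leS_stage0: "leS stage0 (Gamma X)"
  unfolding leS_def stage0_def Gamma_def Let_def by auto

lemma leS_unionS: "x \<in> X \<Longrightarrow> leS x (unionS X)"
  unfolding leS_def unionS_def by auto

lemma unionS_leS:
  assumes "\<And>x. x \<in> X \<Longrightarrow> leS x Y" shows "leS (unionS X) Y"
proof -
  have "\<forall>x\<in>X. fst (fst x) \<subseteq> fst (fst Y) \<and> snd (fst x) \<subseteq> snd (fst Y)
     \<and> fst (snd x) \<subseteq> fst (snd Y) \<and> snd (snd x) \<subseteq> snd (snd Y)"
    using assms unfolding leS_def by blast
  then show ?thesis unfolding leS_def unionS_def fst_conv snd_conv by (simp add: UN_subset_iff)
qed

lemma stage_zero: "(\<forall>y. \<not> y < x) \<Longrightarrow> stage x = stage0"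
  by (subst stage_unfold) (simp add: stage_step_def)

lemma stage_succ:
  assumes "y < x" "\<forall>z. \<not> (y < z \<and> z < x)"
  shows "stage x = Gamma (stage y)"
proof -
  have u: "w = y" if w: "w < x \<and> (\<forall>z. \<not> (w < z \<and> z < x))" for w
  proof (rule ccontr)
    assume "w \<noteq> y"
    then have "w < y \<or> y < w" by (rule neq_iff[THEN iffD1])
    then show False using w assms by blast
  qed
  have "(THE y. y < x \<and> (\<forall>z. \<not> (y < z \<and> z < x))) = y"
    by (rule the_equality) (use assms u in blast)+
  then show ?thesis using assms by (subst stage_unfold) (auto simp: stage_step_def)
qed

lemma stage_lim:
  assumes "y < x" "\<not> (\<exists>y. y < x \<and> (\<forall>z. \<not> (y < z \<and> z < x)))"
  shows "stage x = unionS (stage ` {y. y < x})"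
  using assms by (subst stage_unfold) (auto simp: stage_step_def)

lemma stage_cases:
  fixes x :: "'a::wellorder"
  obtains (zero) "\<forall>y. \<not> y < x" | (succ) y where "y < x" "\<forall>z. \<not> (y < z \<and> z < x)"
  | (lim) y where "y < x" "\<not> (\<exists>y. y < x \<and> (\<forall>z. \<not> (y < z \<and> z < x)))"
  by blast

lemma stage_mono_all:
  fixes x :: "'a::wellorder"
  shows "(\<forall>y<x. leS (Gamma (stage y)) (stage x)) \<and> leS (stage x) (Gamma (stage x))
     \<and> (\<forall>y<x. leS (stage y) (stage x))"
proof (induction x rule: less_induct)
  case (less x)
  show ?case
  proof (cases x rule: stage_cases)
    case zero
    then show ?thesis using stage_zero[OF zero] leS_stage0 by simp
  next
    case (succ z)
    have sx: "stage x = Gamma (stage z)" by (rule stage_succ[OF succ])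
    have lt: "y < x \<Longrightarrow> y < z \<or> y = z" for y using succ by (metis neq_iff)
    have Bz: "leS (stage z) (Gamma (stage z))" using less.IH[OF succ(1)] by blast
    have Az: "\<And>y. y < z \<Longrightarrow> leS (stage y) (stage z)" using less.IH[OF succ(1)] by blast
    have Gz: "\<And>y. y < z \<Longrightarrow> leS (Gamma (stage y)) (stage z)" using less.IH[OF succ(1)] by blast
    have A: "leS (stage y) (Gamma (stage z))" if "y < x" for y
      using lt[OF that] Az Bz leS_trans by blast
    have G: "leS (Gamma (stage y)) (Gamma (stage z))" if "y < x" for y
      using lt[OF that] Gz Bz leS_trans leS_refl by blast
    show ?thesis unfolding sx using A G Gamma_mono[OF Bz] by blast
  next
    case (lim w)
    have sx: "stage x = unionS (stage ` {y. y < x})" by (rule stage_lim[OF lim])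
    have A: "\<forall>y<x. leS (stage y) (stage x)" unfolding sx by (auto intro: leS_unionS)
    have G: "\<forall>y<x. leS (Gamma (stage y)) (stage x)"
    proof (intro allI impI)
      fix y assume "y < x"
      then obtain v where v: "y < v" "v < x" using lim(2) by blast
      have "leS (Gamma (stage y)) (stage v)" using less.IH[OF v(2)] v(1) by blast
      then show "leS (Gamma (stage y)) (stage x)" using A v(2) leS_trans by blast
    qed
    have B: "leS (stage x) (Gamma (stage x))"
    proof -
      have "leS (stage y) (Gamma (stage x))" if "y < x" for y
      proof -
        have "leS (stage y) (Gamma (stage y))" using less.IH[OF that] by blast
        moreover have "leS (Gamma (stage y)) (Gamma (stage x))" using A that Gamma_mono by blast
        ultimately show ?thesis by (rule leS_trans)
      qed
      then show ?thesis unfolding sx by (auto intro: unionS_leS)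
    qed
    show ?thesis using A G B by blast
  qed
qed

lemma from_earlier:
  fixes x :: "'a::wellorder"
  shows "(n \<in> fst (fst (stage x)) \<longrightarrow> (\<exists>y<x. n \<in> fst (fst (Gamma (stage y)))))
       \<and> (n \<in> snd (fst (stage x)) \<longrightarrow> (\<exists>y<x. n \<in> snd (fst (Gamma (stage y)))))
       \<and> (n \<in> fst (snd (stage x)) \<longrightarrow> (\<exists>y<x. n \<in> fst (snd (Gamma (stage y)))))"
proof (induction x rule: less_induct)
  case (less x)
  show ?case
  proof (cases x rule: stage_cases)
    case zero
    then show ?thesis using stage_zero[OF zero] by (simp add: stage0_def)
  next
    case (succ z)
    have "stage x = Gamma (stage z)" by (rule stage_succ[OF succ])
    then show ?thesis using succ(1) by (metis)
  next
    case (lim w)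
    have sx: "stage x = unionS (stage ` {y. y < x})" by (rule stage_lim[OF lim])
    have IH: "\<And>y. y < x \<Longrightarrow> (n \<in> fst (fst (stage y)) \<longrightarrow> (\<exists>z<x. n \<in> fst (fst (Gamma (stage z)))))
       \<and> (n \<in> snd (fst (stage y)) \<longrightarrow> (\<exists>z<x. n \<in> snd (fst (Gamma (stage z)))))
       \<and> (n \<in> fst (snd (stage y)) \<longrightarrow> (\<exists>z<x. n \<in> fst (snd (Gamma (stage z)))))"
      using less.IH by (meson less_trans)
    show ?thesis unfolding sx unionS_def fst_conv snd_conv
      using IH by blast
  qed
qed



lemma leS_le: "(y::'a::wellorder) \<le> x \<Longrightarrow> leS (stage y) (stage x)"
  using stage_mono_all[of x] leS_refl by (cases "y = x") auto

lemma L_T: "code a \<in> fst (fst (stage x)) \<Longrightarrow> sat (fst (stage x)) (snd (stage x)) a"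
proof -
  assume "code a \<in> fst (fst (stage x))"
  then obtain y where y: "y < x" "code a \<in> fst (fst (Gamma (stage y)))" using from_earlier by blast
  then have "sat (fst (stage y)) (snd (stage y)) a" by (auto simp: Gamma_def Let_def dest: code_inj)
  then show ?thesis using satS_mono[OF leS_le[of y x]] y(1) by auto
qed

lemma L_F: "code a \<in> snd (fst (stage x)) \<Longrightarrow> sat (fst (stage x)) (snd (stage x)) (neg a)"
proof -
  assume "code a \<in> snd (fst (stage x))"
  then obtain y where y: "y < x" "code a \<in> snd (fst (Gamma (stage y)))" using from_earlier by blast
  then have "sat (fst (stage y)) (snd (stage y)) (neg a)" by (auto simp: Gamma_def Let_def dest: code_inj)
  then show ?thesis using satS_mono[OF leS_le[of y x]] y(1) by auto
qed

lemma L_P: "code a \<in> fst (snd (stage x)) \<Longrightarrow> \<exists>y<x. satPar (fst (stage y)) (snd (stage y)) (code a)"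
proof -
  assume "code a \<in> fst (snd (stage x))"
  then obtain y where y: "y < x" "code a \<in> fst (snd (Gamma (stage y)))" using from_earlier by blast
  then show ?thesis by (auto simp: Gamma_def Let_def dest: code_inj)
qed

lemma L_D: "fst (fst (stage x)) \<union> snd (fst (stage x)) \<subseteq> snd (snd (stage x))"
proof
  fix n assume "n \<in> fst (fst (stage x)) \<union> snd (fst (stage x))"
  then obtain y where y: "y < x" "n \<in> fst (fst (Gamma (stage y))) \<union> snd (fst (Gamma (stage y)))"
    using from_earlier by blast
  then have "n \<in> snd (snd (Gamma (stage y)))" by (auto simp: Gamma_def Let_def)
  moreover have "leS (Gamma (stage y)) (stage x)" using stage_mono_all[of x] y(1) by blast
  ultimately show "n \<in> snd (snd (stage x))" unfolding leS_def by blast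
qed

lemma no_both:
  assumes "consistent X" "sat (fst X) (snd X) d" "sat (fst X) (snd X) (neg d)" shows False
  using assms satv_cons[of "fst X" "snd X" "\<lambda>_. 0" d] unfolding consistent_def sat_satv by blast

lemma bp_case:
  assumes cons: "consistent (stage x)" and bp: "base_paradoxical c"
  shows "\<not> sat (fst (stage x)) (snd (stage x)) c \<and> \<not> sat (fst (stage x)) (snd (stage x)) (neg c)"
proof -
  have c1: "fst (fst (stage x)) \<inter> snd (fst (stage x)) = {}" "fst (snd (stage x)) \<inter> snd (snd (stage x)) = {}"
    using cons unfolding consistent_def by auto
  have d: "deriv {c} {neg (Tr (quote c))}" "deriv {neg c} {Tr (quote c)}"
    using bp unfolding base_paradoxical_def by auto
  show ?thesis
  proof (intro conjI notI)
    assume s: "sat (fst (stage x)) (snd (stage x)) c"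
    have "sat (fst (stage x)) (snd (stage x)) (neg (Tr (quote c)))" by (rule sound1[OF d(1) c1 s])
    then have "code c \<in> snd (fst (stage x))" by (simp add: quote_def)
    then show False using L_F no_both[OF cons s] by blast
  next
    assume s: "sat (fst (stage x)) (snd (stage x)) (neg c)"
    have "sat (fst (stage x)) (snd (stage x)) (Tr (quote c))" by (rule sound1[OF d(2) c1 s])
    then have "code c \<in> fst (fst (stage x))" by (simp add: quote_def)
    then show False using L_T no_both[OF cons _ s] by blast
  qed
qed

lemma bp_case':
  assumes cons: "consistent (stage x)" and bp: "base_paradoxical c \<or> base_paradoxical (neg c)"
  shows "\<not> sat (fst (stage x)) (snd (stage x)) c \<and> \<not> sat (fst (stage x)) (snd (stage x)) (neg c)"
  using bp_case[OF cons, of c] bp_case[OF cons, of "neg c"] bp by auto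

lemma mainF:
  fixes x :: "'a::wellorder"
  assumes cons: "consistent (stage x)"
  shows "\<gamma> \<le> x \<Longrightarrow> satPar (fst (stage \<gamma>)) (snd (stage \<gamma>)) (code c) \<Longrightarrow>
    \<not> sat (fst (stage x)) (snd (stage x)) c \<and> \<not> sat (fst (stage x)) (snd (stage x)) (neg c)"
proof (induction c arbitrary: \<gamma> rule: measure_induct_rule[of fsz])
  case (less c)
  have c1: "fst (fst (stage x)) \<inter> snd (fst (stage x)) = {}" "fst (snd (stage x)) \<inter> snd (snd (stage x)) = {}"
    using cons unfolding consistent_def by auto
  have le: "leS (stage \<gamma>) (stage x)" using leS_le[OF less.prems(1)] .
  have PgP: "fst (snd (stage \<gamma>)) \<subseteq> fst (snd (stage x))" using le unfolding leS_def by auto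
  have nb: "sat (fst (stage x)) (snd (stage x)) d \<Longrightarrow> sat (fst (stage x)) (snd (stage x)) (neg d) \<Longrightarrow> False" for d
    using no_both[OF cons] by blast
  have subP: "\<not> sat (fst (stage x)) (snd (stage x)) d \<and> \<not> sat (fst (stage x)) (snd (stage x)) (neg d)"
    if h1: "code d \<in> fst (snd (stage \<gamma>))" and h2: "fsz d < fsz c" for d
  proof -
    obtain y where "y < \<gamma>" "satPar (fst (stage y)) (snd (stage y)) (code d)" using L_P[OF h1] by blast
    then show ?thesis using less.IH[OF h2, of y] less.prems(1) by auto
  qed
  have subT: "sat (fst (stage x)) (snd (stage x)) d" if "code d \<in> fst (fst (stage \<gamma>))" for d
    using L_T[of d x] that le unfolding leS_def by auto
  have subF: "sat (fst (stage x)) (snd (stage x)) (neg d)" if "code d \<in> snd (fst (stage \<gamma>))" for d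
    using L_F[of d x] that le unfolding leS_def by auto
  have LD: "fst (fst (stage x)) \<union> snd (fst (stage x)) \<subseteq> snd (snd (stage x))" by (rule L_D)
  from less.prems(2)[unfolded satPar_def] show ?case
    apply (elim disjE exE conjE)
    subgoal by (drule code_inj, simp add: bp_case'[OF cons])
    subgoal by (drule code_inj, simp add: bp_case'[OF cons])
    subgoal apply (drule code_inj) using PgP LD c1 by (auto)
    subgoal apply (drule code_inj) using PgP LD c1 by (auto)
    subgoal apply (drule code_inj) using subP by (auto)
    subgoal apply (drule code_inj) using subP subT nb by (auto)
    subgoal apply (drule code_inj) using subP subT nb by (auto)
    subgoal apply (drule code_inj) using subP by (auto)
    subgoal apply (drule code_inj) using subP subF nb by (auto)
    subgoal apply (drule code_inj) using subP subF nb by (auto)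
    subgoal for a y apply (drule code_inj) using subP[where d="inst a (num n)" for n] subT nb
      by (auto simp: neg_inst[symmetric])
    subgoal for a y apply (drule code_inj) using subP[where d="inst a (num n)" for n] subF nb
      by (auto simp: neg_inst[symmetric])
    done
qed

lemma not_bp_Pr: "\<not> base_paradoxical (Pr t)"
proof
  assume "base_paradoxical (Pr t)"
  then have d: "deriv {Pr t} {neg (Tr (quote (Pr t)))}" unfolding base_paradoxical_def by auto
  have "sat ({}, {}) ({val t}, {}) (neg (Tr (quote (Pr t))))"
    by (rule sound1[OF d]) auto
  then show False by simp
qed

lemma not_bp_NPr: "\<not> base_paradoxical (NPr t)"
proof
  assume "base_paradoxical (NPr t)"
  then have d: "deriv {NPr t} {neg (Tr (quote (NPr t)))}" unfolding base_paradoxical_def by auto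
  have "sat ({}, {}) ({}, {val t}) (neg (Tr (quote (NPr t))))"
    by (rule sound1[OF d]) auto
  then show False by simp
qed

theorem mainTheorem14:
  fixes \<alpha> :: "'a::wellorder"
  assumes "consistent (stage \<alpha>)"
  shows "sound_star (stage \<alpha>)"
  unfolding sound_star_def
proof (intro allI impI notI)
  fix a assume sa: "sentence a"
    and h: "code a \<in> P0minus \<or> sat (fst (stage \<alpha>)) (snd (stage \<alpha>)) (Or a (neg a))"
    and p: "satPar (fst (stage \<alpha>)) (snd (stage \<alpha>)) (code a)"
  show False
  proof (cases "code a \<in> P0minus")
    case True
    then obtain b where "code a = code (Pr (quote b))" unfolding P0minus_def by blast
    then have ab: "a = Pr (quote b)" by (rule code_inj)
    from p[unfolded ab satPar_def] show False
      apply -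
      apply (elim disjE exE conjE)
      apply (drule code_inj[OF sym], simp add: not_bp_Pr not_bp_NPr)+
      done
  next
    case False
    then have "sat (fst (stage \<alpha>)) (snd (stage \<alpha>)) (Or a (neg a))" using h by blast
    then show False using mainF[OF assms order_refl p] by simp
  qed
qed

end
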